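(* Let $(E,C)$ be a configuration structure and let $P$ be a set of properties from the list: rooted; closed under bounded unions; closed under nonempty intersections; closed under bounded nonempty intersections; finite conflict; binary conflict; closed under finitely consistent unions; closed under pairwise consistent unions; closed under finitely consistent nonempty intersections; closed under pairwise consistent nonempty intersections. Suppose $P$ is a package, i.e.: $P$ contains "closed under finitely consistent unions" iff it contains both "closed under bounded unions" and "finite conflict"; $P$ contains "closed under pairwise consistent unions" iff it contains both "closed under bounded unions" and "binary conflict"; $P$ contains "closed under finitely consistent nonempty intersections" iff it contains both "closed under bounded nonempty intersections" and "finite conflict"; $P$ contains "closed under pairwise consistent nonempty intersections" iff it contains both "closed under bounded nonempty intersections" and "binary conflict". Let $P'$ be the set of event-structure properties corresponding to $P$ under: rooted $\mapsto$ rooted; bounded unions $\mapsto$ singular; nonempty intersections $\mapsto$ conjunctive; bounded nonempty intersections $\mapsto$ locally conjunctive; finite conflict $\mapsto$ finite conflict; binary conflict $\mapsto$ binary conflict; finitely consistent unions $\mapsto$ singular and finite conflict; pairwise consistent unions $\mapsto$ singular and binary conflict; finitely consistent nonempty intersections $\mapsto$ locally conjunctive and finite conflict; pairwise consistent nonempty intersections $\mapsto$ locally conjunctive and binary conflict. Then $(E,C)$ has all properties in $P$ if and only if there is an event structure $(E,\vdash)$ with all properties in $P'$ whose set of left-closed configurations is $C$; moreover, in this case such an event structure can be chosen to be pure.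
   Context: An event structure is $(E,\vdash)$ with $\vdash\subseteq\mathcal{P}(E)\times\mathcal{P}(E)$; its left-closed configurations are the $X\subseteq E$ such that every $Y\subseteq X$ has some $Z\subseteq X$ with $Z\vdash Y$. It is pure if $X\vdash Y$ implies $X\cap Y=\emptyset$; rooted if $\emptyset\vdash\emptyset$; singular if $X\vdash Y$ implies $X=\emptyset$ or $|Y|=1$; conjunctive if $X_i\vdash Y$ ($i\in I\ne\emptyset$) implies $\bigcap_iX_i\vdash Y$; locally conjunctive if $X_i\vdash Y$ ($i\in I\neq\emptyset$) together with $\mathrm{Con}(\bigcup_iX_i\cup Y)$ implies $\bigcap_iX_i\vdash Y$, where $\mathrm{Con}(X)$ means every $Y\subseteq X$ has some $Z\subseteq E$ with $Z\vdash Y$; finite conflict if $\emptyset\vdash X$ for all infinite $X$; binary conflict if $\emptyset\vdash X$ for all $X$ with $|X|>2$. A configuration structure $(E,C)$, $C\subseteq\mathcal{P}(E)$, is rooted if $\emptyset\in C$. $X$ is consistent if $X\subseteq z$ for some $z\in C$; finitely (pairwise) consistent if every finite subset (every subset of size $\le 2$) is consistent. Closure properties: bounded unions: $A\subseteq C$, $\bigcup A$ consistent $\Rightarrow\bigcup A\in C$; nonempty intersections: $\emptyset\neq A\subseteq C\Rightarrow\bigcap A\in C$; bounded nonempty intersections: additionally requiring $\bigcup A$ consistent; finitely/pairwise consistent unions (resp. nonempty intersections): $A\subseteq C$ (resp. $\emptyset\ne A\subseteq C$) with $\bigcup A$ finitely/pairwise consistent implies $\bigcup A\in C$ (resp. $\bigcap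 A\in C$). $(E,C)$ has finite conflict if every $X\subseteq E$ such that each finite $Y\subseteq X$ satisfies $Y\subseteq z\subseteq X$ for some $z\in C$ belongs to $C$; binary conflict: the same with $|Y|\le2$ instead of finite $Y$. *)

theory Defs
  imports Main
begin

text \<open>An event structure (E, ent) with ent a relation on subsets of E, written as a
  binary predicate: ent X Y means X enables Y.\<close>

definition event_structure :: "'a set \<Rightarrow> ('a set \<Rightarrow> 'a set \<Rightarrow> bool) \<Rightarrow> bool" where
  "event_structure E ent \<longleftrightarrow> (\<forall>X Y. ent X Y \<longrightarrow> X \<subseteq> E \<and> Y \<subseteq> E)"

definition left_closed_configs :: "'a set \<Rightarrow> ('a set \<Rightarrow> 'a set \<Rightarrow> bool) \<Rightarrow> 'a set set" where
  "left_closed_configs E ent = {X. X \<subseteq> E \<and> (\<forall>Y. Y \<subseteq> X \<longrightarrow> (\<exists>Z. Z \<subseteq> X \<and> ent Z Y))}"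

definition es_Con :: "'a set \<Rightarrow> ('a set \<Rightarrow> 'a set \<Rightarrow> bool) \<Rightarrow> 'a set \<Rightarrow> bool" where
  "es_Con E ent X \<longleftrightarrow> (\<forall>Y. Y \<subseteq> X \<longrightarrow> (\<exists>Z. Z \<subseteq> E \<and> ent Z Y))"

definition es_pure :: "'a set \<Rightarrow> ('a set \<Rightarrow> 'a set \<Rightarrow> bool) \<Rightarrow> bool" where
  "es_pure E ent \<longleftrightarrow> (\<forall>X Y. ent X Y \<longrightarrow> X \<inter> Y = {})"

definition es_rooted :: "'a set \<Rightarrow> ('a set \<Rightarrow> 'a set \<Rightarrow> bool) \<Rightarrow> bool" where
  "es_rooted E ent \<longleftrightarrow> ent {} {}"

definition es_singular :: "'a set \<Rightarrow> ('a set \<Rightarrow> 'a set \<Rightarrow> bool) \<Rightarrow> bool" where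
  "es_singular E ent \<longleftrightarrow> (\<forall>X Y. ent X Y \<longrightarrow> X = {} \<or> card Y = 1)"

text \<open>A nonempty family (X_i) is represented by the nonempty set of its members.\<close>
definition es_conjunctive :: "'a set \<Rightarrow> ('a set \<Rightarrow> 'a set \<Rightarrow> bool) \<Rightarrow> bool" where
  "es_conjunctive E ent \<longleftrightarrow>
     (\<forall>XS Y. XS \<noteq> {} \<and> (\<forall>X\<in>XS. ent X Y) \<longrightarrow> ent (\<Inter>XS) Y)"

definition es_locally_conjunctive :: "'a set \<Rightarrow> ('a set \<Rightarrow> 'a set \<Rightarrow> bool) \<Rightarrow> bool" where
  "es_locally_conjunctive E ent \<longleftrightarrow>
     (\<forall>XS Y. XS \<noteq> {} \<and> (\<forall>X\<in>XS. ent X Y) \<and> es_Con E ent (\<Union>XS \<union> Y)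
        \<longrightarrow> ent (\<Inter>XS) Y)"

definition es_finite_conflict :: "'a set \<Rightarrow> ('a set \<Rightarrow> 'a set \<Rightarrow> bool) \<Rightarrow> bool" where
  "es_finite_conflict E ent \<longleftrightarrow> (\<forall>X. X \<subseteq> E \<and> infinite X \<longrightarrow> ent {} X)"

definition es_binary_conflict :: "'a set \<Rightarrow> ('a set \<Rightarrow> 'a set \<Rightarrow> bool) \<Rightarrow> bool" where
  "es_binary_conflict E ent \<longleftrightarrow>
     (\<forall>X. X \<subseteq> E \<and> (infinite X \<or> card X > 2) \<longrightarrow> ent {} X)"

definition config_structure :: "'a set \<Rightarrow> 'a set set \<Rightarrow> bool" where
  "config_structure E C \<longleftrightarrow> C \<subseteq> Pow E"

definition cs_consistent :: "'a set set \<Rightarrow> 'a set \<Rightarrow> bool" where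
  "cs_consistent C X \<longleftrightarrow> (\<exists>z\<in>C. X \<subseteq> z)"

definition cs_fin_consistent :: "'a set set \<Rightarrow> 'a set \<Rightarrow> bool" where
  "cs_fin_consistent C X \<longleftrightarrow> (\<forall>Y. Y \<subseteq> X \<and> finite Y \<longrightarrow> cs_consistent C Y)"

definition cs_pw_consistent :: "'a set set \<Rightarrow> 'a set \<Rightarrow> bool" where
  "cs_pw_consistent C X \<longleftrightarrow> (\<forall>Y. Y \<subseteq> X \<and> finite Y \<and> card Y \<le> 2 \<longrightarrow> cs_consistent C Y)"

definition cs_rooted :: "'a set \<Rightarrow> 'a set set \<Rightarrow> bool" where
  "cs_rooted E C \<longleftrightarrow> {} \<in> C"

definition cs_bounded_unions :: "'a set \<Rightarrow> 'a set set \<Rightarrow> bool" where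
  "cs_bounded_unions E C \<longleftrightarrow> (\<forall>A. A \<subseteq> C \<and> cs_consistent C (\<Union>A) \<longrightarrow> \<Union>A \<in> C)"

definition cs_ne_inters :: "'a set \<Rightarrow> 'a set set \<Rightarrow> bool" where
  "cs_ne_inters E C \<longleftrightarrow> (\<forall>A. A \<noteq> {} \<and> A \<subseteq> C \<longrightarrow> \<Inter>A \<in> C)"

definition cs_bounded_ne_inters :: "'a set \<Rightarrow> 'a set set \<Rightarrow> bool" where
  "cs_bounded_ne_inters E C \<longleftrightarrow>
     (\<forall>A. A \<noteq> {} \<and> A \<subseteq> C \<and> cs_consistent C (\<Union>A) \<longrightarrow> \<Inter>A \<in> C)"

definition cs_fc_unions :: "'a set \<Rightarrow> 'a set set \<Rightarrow> bool" where
  "cs_fc_unions E C \<longleftrightarrow> (\<forall>A. A \<subseteq> C \<and> cs_fin_consistent C (\<Union>A) \<longrightarrow> \<Union>A \<in> C)"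

definition cs_pc_unions :: "'a set \<Rightarrow> 'a set set \<Rightarrow> bool" where
  "cs_pc_unions E C \<longleftrightarrow> (\<forall>A. A \<subseteq> C \<and> cs_pw_consistent C (\<Union>A) \<longrightarrow> \<Union>A \<in> C)"

definition cs_fc_ne_inters :: "'a set \<Rightarrow> 'a set set \<Rightarrow> bool" where
  "cs_fc_ne_inters E C \<longleftrightarrow>
     (\<forall>A. A \<noteq> {} \<and> A \<subseteq> C \<and> cs_fin_consistent C (\<Union>A) \<longrightarrow> \<Inter>A \<in> C)"

definition cs_pc_ne_inters :: "'a set \<Rightarrow> 'a set set \<Rightarrow> bool" where
  "cs_pc_ne_inters E C \<longleftrightarrow>
     (\<forall>A. A \<noteq> {} \<and> A \<subseteq> C \<and> cs_pw_consistent C (\<Union>A) \<longrightarrow> \<Inter>A \<in> C)"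

definition cs_finite_conflict :: "'a set \<Rightarrow> 'a set set \<Rightarrow> bool" where
  "cs_finite_conflict E C \<longleftrightarrow>
     (\<forall>X. X \<subseteq> E \<and> (\<forall>Y. Y \<subseteq> X \<and> finite Y \<longrightarrow> (\<exists>z\<in>C. Y \<subseteq> z \<and> z \<subseteq> X)) \<longrightarrow> X \<in> C)"

definition cs_binary_conflict :: "'a set \<Rightarrow> 'a set set \<Rightarrow> bool" where
  "cs_binary_conflict E C \<longleftrightarrow>
     (\<forall>X. X \<subseteq> E \<and> (\<forall>Y. Y \<subseteq> X \<and> finite Y \<and> card Y \<le> 2 \<longrightarrow> (\<exists>z\<in>C. Y \<subseteq> z \<and> z \<subseteq> X))
        \<longrightarrow> X \<in> C)"

datatype cprop = CRooted | BoundedUnions | NEInters | BoundedNEInters | CFiniteConflict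
  | CBinaryConflict | FCUnions | PCUnions | FCNEInters | PCNEInters

datatype eprop = ERooted | Singular | Conjunctive | LocallyConjunctive | EFiniteConflict
  | EBinaryConflict

fun cholds :: "cprop \<Rightarrow> 'a set \<Rightarrow> 'a set set \<Rightarrow> bool" where
  "cholds CRooted E C = cs_rooted E C"
| "cholds BoundedUnions E C = cs_bounded_unions E C"
| "cholds NEInters E C = cs_ne_inters E C"
| "cholds BoundedNEInters E C = cs_bounded_ne_inters E C"
| "cholds CFiniteConflict E C = cs_finite_conflict E C"
| "cholds CBinaryConflict E C = cs_binary_conflict E C"
| "cholds FCUnions E C = cs_fc_unions E C"
| "cholds PCUnions E C = cs_pc_unions E C"
| "cholds FCNEInters E C = cs_fc_ne_inters E C"
| "cholds PCNEInters E C = cs_pc_ne_inters E C"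

fun eholds :: "eprop \<Rightarrow> 'a set \<Rightarrow> ('a set \<Rightarrow> 'a set \<Rightarrow> bool) \<Rightarrow> bool" where
  "eholds ERooted E ent = es_rooted E ent"
| "eholds Singular E ent = es_singular E ent"
| "eholds Conjunctive E ent = es_conjunctive E ent"
| "eholds LocallyConjunctive E ent = es_locally_conjunctive E ent"
| "eholds EFiniteConflict E ent = es_finite_conflict E ent"
| "eholds EBinaryConflict E ent = es_binary_conflict E ent"

definition package :: "cprop set \<Rightarrow> bool" where
  "package P \<longleftrightarrow>
     (FCUnions \<in> P \<longleftrightarrow> BoundedUnions \<in> P \<and> CFiniteConflict \<in> P) \<and>
     (PCUnions \<in> P \<longleftrightarrow> BoundedUnions \<in> P \<and> CBinaryConflict \<in> P) \<and>
     (FCNEInters \<in> P \<longleftrightarrow> BoundedNEInters \<in> P \<and> CFiniteConflict \<in> P) \<and>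
     (PCNEInters \<in> P \<longleftrightarrow> BoundedNEInters \<in> P \<and> CBinaryConflict \<in> P)"

fun translate :: "cprop \<Rightarrow> eprop set" where
  "translate CRooted = {ERooted}"
| "translate BoundedUnions = {Singular}"
| "translate NEInters = {Conjunctive}"
| "translate BoundedNEInters = {LocallyConjunctive}"
| "translate CFiniteConflict = {EFiniteConflict}"
| "translate CBinaryConflict = {EBinaryConflict}"
| "translate FCUnions = {Singular, EFiniteConflict}"
| "translate PCUnions = {Singular, EBinaryConflict}"
| "translate FCNEInters = {LocallyConjunctive, EFiniteConflict}"
| "translate PCNEInters = {LocallyConjunctive, EBinaryConflict}"

definition translate_set :: "cprop set \<Rightarrow> eprop set" where
  "translate_set P = (\<Union>p\<in>P. translate p)"

end

theory Submission
  imports Defs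
begin

section \<open>From event structures to configuration structures\<close>

lemma lc_sub: "X \<in> left_closed_configs E ent \<Longrightarrow> X \<subseteq> E"
  by (simp add: left_closed_configs_def)

lemma lc_en: "X \<in> left_closed_configs E ent \<Longrightarrow> Y \<subseteq> X \<Longrightarrow> \<exists>Z. Z \<subseteq> X \<and> ent Z Y"
  by (simp add: left_closed_configs_def)

lemma lc_intro: "X \<subseteq> E \<Longrightarrow> (\<And>Y. Y \<subseteq> X \<Longrightarrow> \<exists>Z. Z \<subseteq> X \<and> ent Z Y) \<Longrightarrow> X \<in> left_closed_configs E ent"
  by (simp add: left_closed_configs_def)

lemma lc_rooted: "es_rooted E ent \<Longrightarrow> cs_rooted E (left_closed_configs E ent)"
  unfolding es_rooted_def cs_rooted_def by (rule lc_intro) auto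

lemma sing_helper:
  assumes S: "es_singular E ent" and hA: "A \<subseteq> left_closed_configs E ent"
    and Y: "Y \<subseteq> \<Union>A" and z: "z \<in> left_closed_configs E ent" "Y \<subseteq> z"
  shows "\<exists>Z. Z \<subseteq> \<Union>A \<and> ent Z Y"
proof -
  obtain Z where Z: "Z \<subseteq> z" "ent Z Y" using lc_en[OF z] by blast
  show ?thesis
  proof (cases "Z = {}")
    case True then show ?thesis using Z by blast
  next
    case False
    have "Z = {} \<or> card Y = 1" using S Z(2) unfolding es_singular_def by blast
    then have "card Y = 1" using False by simp
    then obtain e where e: "Y = {e}" by (auto simp: card_1_singleton_iff)
    then obtain a where a: "a \<in> A" "e \<in> a" using Y by blast
    have "a \<in> left_closed_configs E ent" using subsetD[OF hA a(1)] .
    moreover have "Y \<subseteq> a" using e a by simp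
    ultimately obtain Z' where "Z' \<subseteq> a" "ent Z' Y" using lc_en[of a E ent Y] by blast
    then show ?thesis using a by blast
  qed
qed

lemma lc_bu:
  assumes "es_singular E ent"
  shows "cs_bounded_unions E (left_closed_configs E ent)"
  unfolding cs_bounded_unions_def
proof (intro allI impI)
  fix A assume h: "A \<subseteq> left_closed_configs E ent \<and> cs_consistent (left_closed_configs E ent) (\<Union>A)"
  then obtain z where z: "z \<in> left_closed_configs E ent" "\<Union>A \<subseteq> z" by (auto simp: cs_consistent_def)
  have hA: "A \<subseteq> left_closed_configs E ent" using h by simp
  show "\<Union>A \<in> left_closed_configs E ent"
  proof (rule lc_intro)
    show "\<Union>A \<subseteq> E" using z lc_sub by blast
    fix Y assume Y: "Y \<subseteq> \<Union>A"
    show "\<exists>Z. Z \<subseteq> \<Union>A \<and> ent Z Y" using sing_helper[OF assms hA Y z(1)] Y z(2) by blast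
  qed
qed

lemma lc_fcu:
  assumes S: "es_singular E ent" and F: "es_finite_conflict E ent"
  shows "cs_fc_unions E (left_closed_configs E ent)"
  unfolding cs_fc_unions_def
proof (intro allI impI)
  fix A assume h: "A \<subseteq> left_closed_configs E ent \<and> cs_fin_consistent (left_closed_configs E ent) (\<Union>A)"
  have hA: "A \<subseteq> left_closed_configs E ent" and fc: "cs_fin_consistent (left_closed_configs E ent) (\<Union>A)"
    using h by auto
  have UE: "\<Union>A \<subseteq> E" using hA lc_sub by blast
  show "\<Union>A \<in> left_closed_configs E ent"
  proof (rule lc_intro)
    show "\<Union>A \<subseteq> E" by (rule UE)
    fix Y assume Y: "Y \<subseteq> \<Union>A"
    show "\<exists>Z. Z \<subseteq> \<Union>A \<and> ent Z Y"
    proof (cases "finite Y")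
      case True
      then have "cs_consistent (left_closed_configs E ent) Y" using fc Y unfolding cs_fin_consistent_def by blast
      then obtain z where "z \<in> left_closed_configs E ent" "Y \<subseteq> z" unfolding cs_consistent_def by blast
      then show ?thesis using sing_helper[OF S hA Y] by blast
    next
      case False
      have "Y \<subseteq> E" using Y UE by blast
      then have "ent {} Y" using F False unfolding es_finite_conflict_def by blast
      then show ?thesis by blast
    qed
  qed
qed

lemma lc_pcu:
  assumes S: "es_singular E ent" and F: "es_binary_conflict E ent"
  shows "cs_pc_unions E (left_closed_configs E ent)"
  unfolding cs_pc_unions_def
proof (intro allI impI)
  fix A assume h: "A \<subseteq> left_closed_configs E ent \<and> cs_pw_consistent (left_closed_configs E ent) (\<Union>A)"
  have hA: "A \<subseteq> left_closed_configs E ent" and fc: "cs_pw_consistent (left_closed_configs E ent) (\<Union>A)"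
    using h by auto
  have UE: "\<Union>A \<subseteq> E" using hA lc_sub by blast
  show "\<Union>A \<in> left_closed_configs E ent"
  proof (rule lc_intro)
    show "\<Union>A \<subseteq> E" by (rule UE)
    fix Y assume Y: "Y \<subseteq> \<Union>A"
    show "\<exists>Z. Z \<subseteq> \<Union>A \<and> ent Z Y"
    proof (cases "finite Y \<and> card Y \<le> 2")
      case True
      then have "cs_consistent (left_closed_configs E ent) Y" using fc Y unfolding cs_pw_consistent_def by blast
      then obtain z where "z \<in> left_closed_configs E ent" "Y \<subseteq> z" unfolding cs_consistent_def by blast
      then show ?thesis using sing_helper[OF S hA Y] by blast
    next
      case False
      have "Y \<subseteq> E" using Y UE by blast
      moreover have "infinite Y \<or> card Y > 2" using False by auto
      ultimately have "ent {} Y" using F unfolding es_binary_conflict_def by blast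
      then show ?thesis by blast
    qed
  qed
qed

lemma lc_inter_aux:
  assumes A: "A \<subseteq> left_closed_configs E ent" and Y: "Y \<subseteq> \<Inter>A"
  obtains f where "\<And>a. a \<in> A \<Longrightarrow> f a \<subseteq> a \<and> ent (f a) Y"
proof -
  have "\<forall>a\<in>A. \<exists>Z. Z \<subseteq> a \<and> ent Z Y"
  proof
    fix a assume a: "a \<in> A"
    then have "Y \<subseteq> a" using Y by blast
    then show "\<exists>Z. Z \<subseteq> a \<and> ent Z Y" using lc_en[of a E ent Y] subsetD[OF A a] by blast
  qed
  from bchoice[OF this] obtain f where "\<forall>a\<in>A. f a \<subseteq> a \<and> ent (f a) Y" by blast
  then show ?thesis using that by blast
qed

lemma lc_ni:
  assumes "es_conjunctive E ent"
  shows "cs_ne_inters E (left_closed_configs E ent)"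
  unfolding cs_ne_inters_def
proof (intro allI impI)
  fix A assume h: "A \<noteq> {} \<and> A \<subseteq> left_closed_configs E ent"
  show "\<Inter>A \<in> left_closed_configs E ent"
  proof (rule lc_intro)
    show "\<Inter>A \<subseteq> E" using h lc_sub by blast
    fix Y assume Y: "Y \<subseteq> \<Inter>A"
    obtain f where f: "\<And>a. a \<in> A \<Longrightarrow> f a \<subseteq> a \<and> ent (f a) Y"
      using lc_inter_aux[of A E ent Y] h Y by auto
    have "ent (\<Inter>(f ` A)) Y"
      using assms[unfolded es_conjunctive_def, rule_format, of "f ` A" Y] f h by blast
    moreover have "\<Inter>(f ` A) \<subseteq> \<Inter>A" using f by blast
    ultimately show "\<exists>Z. Z \<subseteq> \<Inter>A \<and> ent Z Y" by blast
  qed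
qed

lemma con_mono: "es_Con E ent X \<Longrightarrow> W \<subseteq> X \<Longrightarrow> es_Con E ent W"
  unfolding es_Con_def by (meson order_trans)

lemma inter_helper:
  assumes LC: "es_locally_conjunctive E ent" and A: "A \<noteq> {}" "A \<subseteq> left_closed_configs E ent"
    and Y: "Y \<subseteq> \<Inter>A" and Con: "es_Con E ent (\<Union>A)"
  shows "\<exists>Z. Z \<subseteq> \<Inter>A \<and> ent Z Y"
proof -
  obtain f where f: "\<And>a. a \<in> A \<Longrightarrow> f a \<subseteq> a \<and> ent (f a) Y"
    using lc_inter_aux[OF A(2) Y] by auto
  have s1: "\<Union>(f ` A) \<subseteq> \<Union>A" using f by blast
  have s2: "Y \<subseteq> \<Union>A" using Y A(1) by blast
  have "\<Union>(f ` A) \<union> Y \<subseteq> \<Union>A" using s1 s2 by (rule Un_least)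
  then have c: "es_Con E ent (\<Union>(f ` A) \<union> Y)" by (rule con_mono[OF Con])
  have ne: "f ` A \<noteq> {}" using A(1) by simp
  have al: "\<forall>X\<in>f ` A. ent X Y" using f by blast
  have "ent (\<Inter>(f ` A)) Y"
    using spec[OF spec[OF LC[unfolded es_locally_conjunctive_def]], of "f ` A" Y] ne al c by blast
  moreover have "\<Inter>(f ` A) \<subseteq> \<Inter>A" using f by blast
  ultimately show ?thesis by blast
qed

lemma lc_con:
  assumes "z \<in> left_closed_configs E ent" "X \<subseteq> z"
  shows "es_Con E ent X"
  unfolding es_Con_def
proof (intro allI impI)
  fix W assume "W \<subseteq> X"
  then have "W \<subseteq> z" using assms by blast
  then obtain Z where "Z \<subseteq> z" "ent Z W" using lc_en[OF assms(1)] by blast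
  moreover have "z \<subseteq> E" using lc_sub assms by blast
  ultimately show "\<exists>Z. Z \<subseteq> E \<and> ent Z W" by blast
qed

lemma lc_bni:
  assumes "es_locally_conjunctive E ent"
  shows "cs_bounded_ne_inters E (left_closed_configs E ent)"
  unfolding cs_bounded_ne_inters_def
proof (intro allI impI)
  fix A assume h: "A \<noteq> {} \<and> A \<subseteq> left_closed_configs E ent \<and> cs_consistent (left_closed_configs E ent) (\<Union>A)"
  then obtain z where z: "z \<in> left_closed_configs E ent" "\<Union>A \<subseteq> z" by (auto simp: cs_consistent_def)
  have A: "A \<noteq> {}" "A \<subseteq> left_closed_configs E ent" using h by auto
  have Con: "es_Con E ent (\<Union>A)" using lc_con[OF z] .
  show "\<Inter>A \<in> left_closed_configs E ent"
  proof (rule lc_intro)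
    show "\<Inter>A \<subseteq> E" using A lc_sub by blast
    fix Y assume Y: "Y \<subseteq> \<Inter>A"
    show "\<exists>Z. Z \<subseteq> \<Inter>A \<and> ent Z Y" using inter_helper[OF assms A Y Con] .
  qed
qed

lemma lc_fcni:
  assumes L: "es_locally_conjunctive E ent" and F: "es_finite_conflict E ent"
  shows "cs_fc_ne_inters E (left_closed_configs E ent)"
  unfolding cs_fc_ne_inters_def
proof (intro allI impI)
  fix A assume h: "A \<noteq> {} \<and> A \<subseteq> left_closed_configs E ent \<and> cs_fin_consistent (left_closed_configs E ent) (\<Union>A)"
  have A: "A \<noteq> {}" "A \<subseteq> left_closed_configs E ent" and fc: "cs_fin_consistent (left_closed_configs E ent) (\<Union>A)"
    using h by auto
  have UE: "\<Union>A \<subseteq> E" using A lc_sub by blast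
  have Con: "es_Con E ent (\<Union>A)"
    unfolding es_Con_def
  proof (intro allI impI)
    fix W assume W: "W \<subseteq> \<Union>A"
    show "\<exists>Z. Z \<subseteq> E \<and> ent Z W"
    proof (cases "finite W")
      case True
      then have "cs_consistent (left_closed_configs E ent) W" using fc W unfolding cs_fin_consistent_def by blast
      then obtain z where "z \<in> left_closed_configs E ent" "W \<subseteq> z" unfolding cs_consistent_def by blast
      then have "es_Con E ent W" by (rule lc_con)
      then show ?thesis unfolding es_Con_def by blast
    next
      case False
      have "W \<subseteq> E" using W UE by blast
      then have "ent {} W" using F False unfolding es_finite_conflict_def by blast
      then show ?thesis by blast
    qed
  qed
  show "\<Inter>A \<in> left_closed_configs E ent"
  proof (rule lc_intro)
    show "\<Inter>A \<subseteq> E" using A lc_sub by blast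
    fix Y assume Y: "Y \<subseteq> \<Inter>A"
    show "\<exists>Z. Z \<subseteq> \<Inter>A \<and> ent Z Y" using inter_helper[OF L A Y Con] .
  qed
qed

lemma lc_pcni:
  assumes L: "es_locally_conjunctive E ent" and F: "es_binary_conflict E ent"
  shows "cs_pc_ne_inters E (left_closed_configs E ent)"
  unfolding cs_pc_ne_inters_def
proof (intro allI impI)
  fix A assume h: "A \<noteq> {} \<and> A \<subseteq> left_closed_configs E ent \<and> cs_pw_consistent (left_closed_configs E ent) (\<Union>A)"
  have A: "A \<noteq> {}" "A \<subseteq> left_closed_configs E ent" and fc: "cs_pw_consistent (left_closed_configs E ent) (\<Union>A)"
    using h by auto
  have UE: "\<Union>A \<subseteq> E" using A lc_sub by blast
  have Con: "es_Con E ent (\<Union>A)"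
    unfolding es_Con_def
  proof (intro allI impI)
    fix W assume W: "W \<subseteq> \<Union>A"
    show "\<exists>Z. Z \<subseteq> E \<and> ent Z W"
    proof (cases "finite W \<and> card W \<le> 2")
      case True
      then have "cs_consistent (left_closed_configs E ent) W" using fc W unfolding cs_pw_consistent_def by blast
      then obtain z where "z \<in> left_closed_configs E ent" "W \<subseteq> z" unfolding cs_consistent_def by blast
      then have "es_Con E ent W" by (rule lc_con)
      then show ?thesis unfolding es_Con_def by blast
    next
      case False
      have "W \<subseteq> E" using W UE by blast
      moreover have "infinite W \<or> card W > 2" using False by auto
      ultimately have "ent {} W" using F unfolding es_binary_conflict_def by blast
      then show ?thesis by blast
    qed
  qed
  show "\<Inter>A \<in> left_closed_configs E ent"
  proof (rule lc_intro)
    show "\<Inter>A \<subseteq> E" using A lc_sub by blast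
    fix Y assume Y: "Y \<subseteq> \<Inter>A"
    show "\<exists>Z. Z \<subseteq> \<Inter>A \<and> ent Z Y" using inter_helper[OF L A Y Con] .
  qed
qed

lemma lc_fcf:
  assumes "es_finite_conflict E ent"
  shows "cs_finite_conflict E (left_closed_configs E ent)"
  unfolding cs_finite_conflict_def
proof (intro allI impI)
  fix X assume h: "X \<subseteq> E \<and> (\<forall>Y. Y \<subseteq> X \<and> finite Y \<longrightarrow> (\<exists>z\<in>left_closed_configs E ent. Y \<subseteq> z \<and> z \<subseteq> X))"
  have XE: "X \<subseteq> E" and h2: "\<And>Y. Y \<subseteq> X \<Longrightarrow> finite Y \<Longrightarrow> \<exists>z\<in>left_closed_configs E ent. Y \<subseteq> z \<and> z \<subseteq> X"
    using h by auto
  show "X \<in> left_closed_configs E ent"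
  proof (rule lc_intro)
    show "X \<subseteq> E" by (rule XE)
    fix Y assume Y: "Y \<subseteq> X"
    show "\<exists>Z. Z \<subseteq> X \<and> ent Z Y"
    proof (cases "finite Y")
      case True
      then obtain z where z: "z \<in> left_closed_configs E ent" "Y \<subseteq> z" "z \<subseteq> X" using h2[OF Y] by blast
      then obtain Z where "Z \<subseteq> z" "ent Z Y" using lc_en[OF z(1) z(2)] by blast
      then show ?thesis using z(3) by blast
    next
      case False
      have "Y \<subseteq> E" using Y XE by blast
      then have "ent {} Y" using assms False unfolding es_finite_conflict_def by blast
      then show ?thesis by blast
    qed
  qed
qed

lemma lc_bcf:
  assumes "es_binary_conflict E ent"
  shows "cs_binary_conflict E (left_closed_configs E ent)"
  unfolding cs_binary_conflict_def
proof (intro allI impI)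
  fix X assume h: "X \<subseteq> E \<and> (\<forall>Y. Y \<subseteq> X \<and> finite Y \<and> card Y \<le> 2 \<longrightarrow> (\<exists>z\<in>left_closed_configs E ent. Y \<subseteq> z \<and> z \<subseteq> X))"
  have XE: "X \<subseteq> E" and h2: "\<And>Y. Y \<subseteq> X \<Longrightarrow> finite Y \<Longrightarrow> card Y \<le> 2 \<Longrightarrow> \<exists>z\<in>left_closed_configs E ent. Y \<subseteq> z \<and> z \<subseteq> X"
    using h by auto
  show "X \<in> left_closed_configs E ent"
  proof (rule lc_intro)
    show "X \<subseteq> E" by (rule XE)
    fix Y assume Y: "Y \<subseteq> X"
    show "\<exists>Z. Z \<subseteq> X \<and> ent Z Y"
    proof (cases "finite Y \<and> card Y \<le> 2")
      case True
      then obtain z where z: "z \<in> left_closed_configs E ent" "Y \<subseteq> z" "z \<subseteq> X" using h2[OF Y] by blast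
      then obtain Z where "Z \<subseteq> z" "ent Z Y" using lc_en[OF z(1) z(2)] by blast
      then show ?thesis using z(3) by blast
    next
      case False
      have "Y \<subseteq> E" using Y XE by blast
      moreover have "infinite Y \<or> card Y > 2" using False by auto
      ultimately have "ent {} Y" using assms unfolding es_binary_conflict_def by blast
      then show ?thesis by blast
    qed
  qed
qed


lemma es_to_cs:
  assumes H: "\<forall>q\<in>translate_set P. eholds q E ent" and p: "p \<in> P"
  shows "cholds p E (left_closed_configs E ent)"
proof -
  have T: "\<And>q. q \<in> translate p \<Longrightarrow> eholds q E ent"
  proof -
    fix q assume "q \<in> translate p"
    then have "q \<in> translate_set P" using p unfolding translate_set_def by blast
    then show "eholds q E ent" using H by blast
  qed
  show ?thesis
  proof (cases p)
    case CRooted then show ?thesis using T[of ERooted] lc_rooted by simp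
  next
    case BoundedUnions then show ?thesis using T[of Singular] lc_bu by simp
  next
    case NEInters then show ?thesis using T[of Conjunctive] lc_ni by simp
  next
    case BoundedNEInters then show ?thesis using T[of LocallyConjunctive] lc_bni by simp
  next
    case CFiniteConflict then show ?thesis using T[of EFiniteConflict] lc_fcf by simp
  next
    case CBinaryConflict then show ?thesis using T[of EBinaryConflict] lc_bcf by simp
  next
    case FCUnions then show ?thesis using T[of Singular] T[of EFiniteConflict] lc_fcu by simp
  next
    case PCUnions then show ?thesis using T[of Singular] T[of EBinaryConflict] lc_pcu by simp
  next
    case FCNEInters then show ?thesis using T[of LocallyConjunctive] T[of EFiniteConflict] lc_fcni by simp
  next
    case PCNEInters then show ?thesis using T[of LocallyConjunctive] T[of EBinaryConflict] lc_pcni by simp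
  qed
qed

section \<open>From configuration structures to event structures\<close>

definition DD :: "cprop set \<Rightarrow> 'a set \<Rightarrow> bool" where
  "DD P Y \<longleftrightarrow> (CFiniteConflict \<in> P \<and> infinite Y) \<or> (CBinaryConflict \<in> P \<and> (infinite Y \<or> card Y > 2))"

lemma DD_small: "finite Y \<Longrightarrow> card Y \<le> 2 \<Longrightarrow> \<not> DD P Y"
  unfolding DD_def by auto

lemma DD_fin: "finite Y \<Longrightarrow> CBinaryConflict \<notin> P \<Longrightarrow> \<not> DD P Y"
  unfolding DD_def by auto

lemma DD_none: "CFiniteConflict \<notin> P \<Longrightarrow> CBinaryConflict \<notin> P \<Longrightarrow> \<not> DD P Y"
  unfolding DD_def by auto

lemma getH: "\<forall>p\<in>P. cholds p E C \<Longrightarrow> p \<in> P \<Longrightarrow> cholds p E C"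
  by (rule bspec)

lemma G_union:
  assumes pk: "package P" and H: "\<forall>p\<in>P. cholds p E C" and BU: "BoundedUnions \<in> P"
    and A: "A \<subseteq> C" and V: "\<And>V. V \<subseteq> \<Union>A \<Longrightarrow> cs_consistent C V \<or> DD P V"
  shows "\<Union>A \<in> C"
proof (cases "CBinaryConflict \<in> P")
  case True
  then have "PCUnions \<in> P" using pk BU unfolding package_def by blast
  then have c: "cs_pc_unions E C" using getH[OF H] by fastforce
  have pw: "cs_pw_consistent C (\<Union>A)" unfolding cs_pw_consistent_def
  proof (intro allI impI)
    fix Y assume "Y \<subseteq> \<Union>A \<and> finite Y \<and> card Y \<le> 2"
    then show "cs_consistent C Y" using V[of Y] DD_small[of Y P] by blast
  qed
  show ?thesis using spec[OF c[unfolded cs_pc_unions_def], of A] A pw by blast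
next
  case False
  show ?thesis
  proof (cases "CFiniteConflict \<in> P")
    case True
    then have "FCUnions \<in> P" using pk BU unfolding package_def by blast
    then have c: "cs_fc_unions E C" using getH[OF H] by fastforce
    have pw: "cs_fin_consistent C (\<Union>A)" unfolding cs_fin_consistent_def
    proof (intro allI impI)
      fix Y assume "Y \<subseteq> \<Union>A \<and> finite Y"
      then show "cs_consistent C Y" using V[of Y] DD_fin[of Y P] False by blast
    qed
    show ?thesis using spec[OF c[unfolded cs_fc_unions_def], of A] A pw by blast
  next
    case F2: False
    have c: "cs_bounded_unions E C" using getH[OF H BU] by simp
    have "cs_consistent C (\<Union>A)" using V[of "\<Union>A"] DD_none[OF F2 False] by blast
    then show ?thesis using spec[OF c[unfolded cs_bounded_unions_def], of A] A by blast
  qed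
qed

lemma G_inter:
  assumes pk: "package P" and H: "\<forall>p\<in>P. cholds p E C" and BU: "BoundedNEInters \<in> P"
    and A: "A \<subseteq> C" "A \<noteq> {}" and V: "\<And>V. V \<subseteq> \<Union>A \<Longrightarrow> cs_consistent C V \<or> DD P V"
  shows "\<Inter>A \<in> C"
proof (cases "CBinaryConflict \<in> P")
  case True
  then have "PCNEInters \<in> P" using pk BU unfolding package_def by blast
  then have c: "cs_pc_ne_inters E C" using getH[OF H] by fastforce
  have pw: "cs_pw_consistent C (\<Union>A)" unfolding cs_pw_consistent_def
  proof (intro allI impI)
    fix Y assume "Y \<subseteq> \<Union>A \<and> finite Y \<and> card Y \<le> 2"
    then show "cs_consistent C Y" using V[of Y] DD_small[of Y P] by blast
  qed
  show ?thesis using spec[OF c[unfolded cs_pc_ne_inters_def], of A] A pw by blast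
next
  case False
  show ?thesis
  proof (cases "CFiniteConflict \<in> P")
    case True
    then have "FCNEInters \<in> P" using pk BU unfolding package_def by blast
    then have c: "cs_fc_ne_inters E C" using getH[OF H] by fastforce
    have pw: "cs_fin_consistent C (\<Union>A)" unfolding cs_fin_consistent_def
    proof (intro allI impI)
      fix Y assume "Y \<subseteq> \<Union>A \<and> finite Y"
      then show "cs_consistent C Y" using V[of Y] DD_fin[of Y P] False by blast
    qed
    show ?thesis using spec[OF c[unfolded cs_fc_ne_inters_def], of A] A pw by blast
  next
    case F2: False
    have c: "cs_bounded_ne_inters E C" using getH[OF H BU] by simp
    have "cs_consistent C (\<Union>A)" using V[of "\<Union>A"] DD_none[OF F2 False] by blast
    then show ?thesis using spec[OF c[unfolded cs_bounded_ne_inters_def], of A] A by blast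
  qed
qed

lemma G_conf:
  assumes pk: "package P" and H: "\<forall>p\<in>P. cholds p E C"
    and X: "X \<subseteq> E" and V: "\<And>Y. Y \<subseteq> X \<Longrightarrow> (\<exists>z\<in>C. Y \<subseteq> z \<and> z \<subseteq> X) \<or> DD P Y"
  shows "X \<in> C"
proof (cases "CBinaryConflict \<in> P")
  case True
  then have c: "cs_binary_conflict E C" using getH[OF H] by fastforce
  have pw: "\<forall>Y. Y \<subseteq> X \<and> finite Y \<and> card Y \<le> 2 \<longrightarrow> (\<exists>z\<in>C. Y \<subseteq> z \<and> z \<subseteq> X)"
  proof (intro allI impI)
    fix Y assume "Y \<subseteq> X \<and> finite Y \<and> card Y \<le> 2"
    then show "\<exists>z\<in>C. Y \<subseteq> z \<and> z \<subseteq> X" using V[of Y] DD_small[of Y P] by blast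
  qed
  show ?thesis using spec[OF c[unfolded cs_binary_conflict_def], of X] X pw by blast
next
  case False
  show ?thesis
  proof (cases "CFiniteConflict \<in> P")
    case True
    then have c: "cs_finite_conflict E C" using getH[OF H] by fastforce
    have pw: "\<forall>Y. Y \<subseteq> X \<and> finite Y \<longrightarrow> (\<exists>z\<in>C. Y \<subseteq> z \<and> z \<subseteq> X)"
    proof (intro allI impI)
      fix Y assume "Y \<subseteq> X \<and> finite Y"
      then show "\<exists>z\<in>C. Y \<subseteq> z \<and> z \<subseteq> X" using V[of Y] DD_fin[of Y P] False by blast
    qed
    show ?thesis using spec[OF c[unfolded cs_finite_conflict_def], of X] X pw by blast
  next
    case F2: False
    have "\<exists>z\<in>C. X \<subseteq> z \<and> z \<subseteq> X" using V[of X] DD_none[OF F2 False] by blast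
    then show ?thesis by (metis subset_antisym)
  qed
qed


lemma inter_un: "XS \<noteq> {} \<Longrightarrow> \<Inter>((\<lambda>X. X \<union> Y) ` XS) = \<Inter>XS \<union> Y"
  by blast

lemma union_un: "XS \<noteq> {} \<Longrightarrow> \<Union>((\<lambda>X. X \<union> Y) ` XS) = \<Union>XS \<union> Y"
  by blast

definition ent1 :: "'a set set \<Rightarrow> cprop set \<Rightarrow> 'a set \<Rightarrow> 'a set \<Rightarrow> 'a set \<Rightarrow> bool" where
  "ent1 C P E Z Y \<longleftrightarrow> Z \<inter> Y = {} \<and> (Z \<union> Y \<in> C \<or> (Z = {} \<and> DD P Y \<and> Y \<subseteq> E))"

lemma e1_es: "config_structure E C \<Longrightarrow> event_structure E (ent1 C P E)"
  unfolding config_structure_def event_structure_def ent1_def by blast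

lemma e1_pure: "es_pure E (ent1 C P E)"
  unfolding es_pure_def ent1_def by blast

lemma e1_lc:
  assumes cs: "config_structure E C" and pk: "package P" and H: "\<forall>p\<in>P. cholds p E C"
  shows "left_closed_configs E (ent1 C P E) = C"
proof
  show "left_closed_configs E (ent1 C P E) \<subseteq> C"
  proof
    fix X assume X: "X \<in> left_closed_configs E (ent1 C P E)"
    show "X \<in> C"
    proof (rule G_conf[OF pk H lc_sub[OF X]])
      fix Y assume Y: "Y \<subseteq> X"
      obtain Z where Z: "Z \<subseteq> X" "ent1 C P E Z Y" using lc_en[OF X Y] by blast
      then have "Z \<union> Y \<in> C \<or> DD P Y" unfolding ent1_def by blast
      moreover have "Y \<subseteq> Z \<union> Y" "Z \<union> Y \<subseteq> X" using Z Y by auto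
      ultimately show "(\<exists>z\<in>C. Y \<subseteq> z \<and> z \<subseteq> X) \<or> DD P Y" by blast
    qed
  qed
next
  show "C \<subseteq> left_closed_configs E (ent1 C P E)"
  proof
    fix X assume X: "X \<in> C"
    show "X \<in> left_closed_configs E (ent1 C P E)"
    proof (rule lc_intro)
      show "X \<subseteq> E" using X cs unfolding config_structure_def by blast
      fix Y assume Y: "Y \<subseteq> X"
      have "(X - Y) \<union> Y = X" using Y by blast
      then have "ent1 C P E (X - Y) Y" unfolding ent1_def using X by auto
      then show "\<exists>Z. Z \<subseteq> X \<and> ent1 C P E Z Y" by blast
    qed
  qed
qed

lemma e1_rooted:
  assumes H: "\<forall>p\<in>P. cholds p E C" and R: "CRooted \<in> P"
  shows "es_rooted E (ent1 C P E)"
proof -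
  have "cholds CRooted E C" using H R by (rule getH)
  then have "{} \<in> C" by (simp add: cs_rooted_def)
  then show ?thesis by (auto simp: es_rooted_def ent1_def cs_consistent_def)
qed

lemma e1_fc: "CFiniteConflict \<in> P \<Longrightarrow> es_finite_conflict E (ent1 C P E)"
  unfolding es_finite_conflict_def ent1_def DD_def by blast

lemma e1_bc: "CBinaryConflict \<in> P \<Longrightarrow> es_binary_conflict E (ent1 C P E)"
  unfolding es_binary_conflict_def ent1_def DD_def by blast

lemma e1_inter_core:
  assumes XS: "XS \<noteq> {}" and all: "\<forall>X\<in>XS. ent1 C P E X Y"
    and cl: "(\<forall>X\<in>XS. X \<union> Y \<in> C) \<Longrightarrow> \<Inter>((\<lambda>X. X \<union> Y) ` XS) \<in> C"
  shows "ent1 C P E (\<Inter>XS) Y"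
proof -
  obtain X0 where X0: "X0 \<in> XS" using XS by blast
  have disj: "\<Inter>XS \<inter> Y = {}" using all X0 unfolding ent1_def by blast
  show ?thesis
  proof (cases "\<exists>X\<in>XS. X = {} \<and> DD P Y \<and> Y \<subseteq> E")
    case True
    then have "\<Inter>XS = {}" by blast
    then show ?thesis using True unfolding ent1_def by auto
  next
    case False
    then have "\<forall>X\<in>XS. X \<union> Y \<in> C" using all unfolding ent1_def by blast
    then have "\<Inter>XS \<union> Y \<in> C" using cl inter_un[OF XS] by simp
    then show ?thesis using disj unfolding ent1_def by blast
  qed
qed

lemma e1_conj:
  assumes H: "\<forall>p\<in>P. cholds p E C" and NI: "NEInters \<in> P"
  shows "es_conjunctive E (ent1 C P E)"
  unfolding es_conjunctive_def
proof (intro allI impI)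
  fix XS Y assume h: "XS \<noteq> {} \<and> (\<forall>X\<in>XS. ent1 C P E X Y)"
  have c: "cs_ne_inters E C" using getH[OF H NI] by simp
  show "ent1 C P E (\<Inter>XS) Y"
  proof (rule e1_inter_core)
    show "XS \<noteq> {}" "\<forall>X\<in>XS. ent1 C P E X Y" using h by auto
    assume a: "\<forall>X\<in>XS. X \<union> Y \<in> C"
    have "(\<lambda>X. X \<union> Y) ` XS \<noteq> {}" "(\<lambda>X. X \<union> Y) ` XS \<subseteq> C" using h a by auto
    then show "\<Inter>((\<lambda>X. X \<union> Y) ` XS) \<in> C"
      using spec[OF c[unfolded cs_ne_inters_def], of "(\<lambda>X. X \<union> Y) ` XS"] by blast
  qed
qed

lemma e1_lconj:
  assumes pk: "package P" and H: "\<forall>p\<in>P. cholds p E C" and NI: "BoundedNEInters \<in> P"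
  shows "es_locally_conjunctive E (ent1 C P E)"
  unfolding es_locally_conjunctive_def
proof (intro allI impI)
  fix XS Y assume h: "XS \<noteq> {} \<and> (\<forall>X\<in>XS. ent1 C P E X Y) \<and> es_Con E (ent1 C P E) (\<Union>XS \<union> Y)"
  have XS: "XS \<noteq> {}" and Con: "es_Con E (ent1 C P E) (\<Union>XS \<union> Y)" using h by auto
  show "ent1 C P E (\<Inter>XS) Y"
  proof (rule e1_inter_core)
    show "XS \<noteq> {}" "\<forall>X\<in>XS. ent1 C P E X Y" using h by auto
    assume a: "\<forall>X\<in>XS. X \<union> Y \<in> C"
    show "\<Inter>((\<lambda>X. X \<union> Y) ` XS) \<in> C"
    proof (rule G_inter[OF pk H NI])
      show "(\<lambda>X. X \<union> Y) ` XS \<subseteq> C" "(\<lambda>X. X \<union> Y) ` XS \<noteq> {}" using a XS by auto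
      fix V assume "V \<subseteq> \<Union>((\<lambda>X. X \<union> Y) ` XS)"
      then have "V \<subseteq> \<Union>XS \<union> Y" using union_un[OF XS] by simp
      then obtain Z where "ent1 C P E Z V" using Con unfolding es_Con_def by blast
      then have "Z \<union> V \<in> C \<or> DD P V" unfolding ent1_def by blast
      then show "cs_consistent C V \<or> DD P V" unfolding cs_consistent_def by blast
    qed
  qed
qed

definition ent2 :: "'a set set \<Rightarrow> cprop set \<Rightarrow> 'a set \<Rightarrow> 'a set \<Rightarrow> 'a set \<Rightarrow> bool" where
  "ent2 C P E Z Y \<longleftrightarrow> (Z = {} \<and> card Y \<noteq> 1 \<and> Y \<subseteq> E \<and> (cs_consistent C Y \<or> DD P Y))
      \<or> (\<exists>e. Y = {e} \<and> e \<notin> Z \<and> Z \<union> {e} \<in> C)"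

lemma e2_es: "config_structure E C \<Longrightarrow> event_structure E (ent2 C P E)"
  unfolding config_structure_def event_structure_def ent2_def by blast

lemma e2_pure: "es_pure E (ent2 C P E)"
  unfolding es_pure_def ent2_def by blast

lemma e2_sing: "es_singular E (ent2 C P E)"
  unfolding es_singular_def ent2_def by auto

lemma e2_cons: "ent2 C P E Z V \<Longrightarrow> cs_consistent C V \<or> DD P V"
  unfolding ent2_def cs_consistent_def by blast

lemma e2_single: "ent2 C P E Z {e} \<Longrightarrow> e \<notin> Z \<and> Z \<union> {e} \<in> C"
  unfolding ent2_def by auto

lemma e2_lc:
  assumes cs: "config_structure E C" and pk: "package P" and H: "\<forall>p\<in>P. cholds p E C"
    and BU: "BoundedUnions \<in> P"
  shows "left_closed_configs E (ent2 C P E) = C"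
proof
  show "left_closed_configs E (ent2 C P E) \<subseteq> C"
  proof
    fix X assume X: "X \<in> left_closed_configs E (ent2 C P E)"
    define A where "A = {z\<in>C. z \<subseteq> X}"
    have AX: "\<Union>A = X"
    proof
      show "\<Union>A \<subseteq> X" unfolding A_def by blast
      show "X \<subseteq> \<Union>A"
      proof
        fix e assume e: "e \<in> X"
        then have "{e} \<subseteq> X" by simp
        from lc_en[OF X this] obtain Z where Z: "Z \<subseteq> X" "ent2 C P E Z {e}" by (elim exE conjE)
        have "Z \<union> {e} \<in> C" using e2_single[OF Z(2)] by (rule conjunct2)
        moreover have "Z \<union> {e} \<subseteq> X" using Z e by blast
        ultimately show "e \<in> \<Union>A" unfolding A_def by blast
      qed
    qed
    have "\<Union>A \<in> C"
    proof (rule G_union[OF pk H BU])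
      show "A \<subseteq> C" unfolding A_def by blast
      fix V assume "V \<subseteq> \<Union>A"
      then have "V \<subseteq> X" using AX by simp
      from lc_en[OF X this] obtain Z where "Z \<subseteq> X" "ent2 C P E Z V" by (elim exE conjE)
      then show "cs_consistent C V \<or> DD P V" using e2_cons by blast
    qed
    then show "X \<in> C" using AX by simp
  qed
next
  show "C \<subseteq> left_closed_configs E (ent2 C P E)"
  proof
    fix X assume X: "X \<in> C"
    have XE: "X \<subseteq> E" using X cs unfolding config_structure_def by blast
    show "X \<in> left_closed_configs E (ent2 C P E)"
    proof (rule lc_intro)
      show "X \<subseteq> E" by (rule XE)
      fix Y assume Y: "Y \<subseteq> X"
      show "\<exists>Z. Z \<subseteq> X \<and> ent2 C P E Z Y"
      proof (cases "card Y = 1")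
        case True
        then obtain e where e: "Y = {e}" by (auto simp: card_1_singleton_iff)
        have "(X - {e}) \<union> {e} = X" using Y e by blast
        then have "(X - {e}) \<union> {e} \<in> C" using X by simp
        moreover have "e \<notin> X - {e}" by simp
        ultimately have "ent2 C P E (X - {e}) Y" unfolding ent2_def using e by blast
        moreover have "X - {e} \<subseteq> X" by blast
        ultimately show ?thesis by blast
      next
        case False
        have "cs_consistent C Y" unfolding cs_consistent_def using X Y by blast
        moreover have "Y \<subseteq> E" using Y XE by blast
        ultimately have "ent2 C P E {} Y" unfolding ent2_def using False by simp
        then show ?thesis by blast
      qed
    qed
  qed
qed

lemma e2_rooted:
  assumes H: "\<forall>p\<in>P. cholds p E C" and R: "CRooted \<in> P"
  shows "es_rooted E (ent2 C P E)"
proof -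
  have "cholds CRooted E C" using H R by (rule getH)
  then have "{} \<in> C" by (simp add: cs_rooted_def)
  then show ?thesis by (auto simp: es_rooted_def ent2_def cs_consistent_def)
qed

lemma e2_fc: "CFiniteConflict \<in> P \<Longrightarrow> es_finite_conflict E (ent2 C P E)"
  unfolding es_finite_conflict_def ent2_def DD_def by auto

lemma e2_bc: "CBinaryConflict \<in> P \<Longrightarrow> es_binary_conflict E (ent2 C P E)"
  unfolding es_binary_conflict_def ent2_def DD_def by auto

lemma e2_inter_core:
  assumes XS: "XS \<noteq> {}" and all: "\<forall>X\<in>XS. ent2 C P E X Y"
    and cl: "\<And>e. Y = {e} \<Longrightarrow> (\<forall>X\<in>XS. X \<union> {e} \<in> C) \<Longrightarrow> \<Inter>((\<lambda>X. X \<union> {e}) ` XS) \<in> C"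
  shows "ent2 C P E (\<Inter>XS) Y"
proof -
  obtain X0 where X0: "X0 \<in> XS" using XS by blast
  show ?thesis
  proof (cases "card Y = 1")
    case True
    then obtain e where e: "Y = {e}" by (auto simp: card_1_singleton_iff)
    have a: "\<forall>X\<in>XS. e \<notin> X \<and> X \<union> {e} \<in> C"
    proof
      fix X assume "X \<in> XS"
      then have "ent2 C P E X {e}" using bspec[OF all] e by simp
      then show "e \<notin> X \<and> X \<union> {e} \<in> C" by (rule e2_single)
    qed
    then have "\<forall>X\<in>XS. X \<union> {e} \<in> C" by simp
    then have "\<Inter>((\<lambda>X. X \<union> {e}) ` XS) \<in> C" by (rule cl[OF e])
    then have i1: "\<Inter>XS \<union> {e} \<in> C" using inter_un[OF XS, of "{e}"] by simp
    have i2: "e \<notin> \<Inter>XS" using a X0 by auto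
    show ?thesis unfolding ent2_def using e i1 i2 by (intro disjI2 exI[of _ e]) simp
  next
    case False
    have "ent2 C P E X0 Y" using bspec[OF all X0] .
    then have c: "X0 = {} \<and> card Y \<noteq> 1 \<and> Y \<subseteq> E \<and> (cs_consistent C Y \<or> DD P Y)"
      using False unfolding ent2_def by auto
    then have "\<Inter>XS = {}" using X0 by blast
    then show ?thesis using c unfolding ent2_def by simp
  qed
qed

lemma e2_conj:
  assumes H: "\<forall>p\<in>P. cholds p E C" and NI: "NEInters \<in> P"
  shows "es_conjunctive E (ent2 C P E)"
  unfolding es_conjunctive_def
proof (intro allI impI)
  fix XS Y assume h: "XS \<noteq> {} \<and> (\<forall>X\<in>XS. ent2 C P E X Y)"
  have c: "cs_ne_inters E C" using getH[OF H NI] by simp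
  show "ent2 C P E (\<Inter>XS) Y"
  proof (rule e2_inter_core)
    show "XS \<noteq> {}" "\<forall>X\<in>XS. ent2 C P E X Y" using h by auto
    fix e assume a: "\<forall>X\<in>XS. X \<union> {e} \<in> C"
    have "(\<lambda>X. X \<union> {e}) ` XS \<noteq> {}" "(\<lambda>X. X \<union> {e}) ` XS \<subseteq> C" using h a by auto
    then show "\<Inter>((\<lambda>X. X \<union> {e}) ` XS) \<in> C"
      using spec[OF c[unfolded cs_ne_inters_def], of "(\<lambda>X. X \<union> {e}) ` XS"] by blast
  qed
qed

lemma e2_lconj:
  assumes pk: "package P" and H: "\<forall>p\<in>P. cholds p E C" and NI: "BoundedNEInters \<in> P"
  shows "es_locally_conjunctive E (ent2 C P E)"
  unfolding es_locally_conjunctive_def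
proof (intro allI impI)
  fix XS Y assume h: "XS \<noteq> {} \<and> (\<forall>X\<in>XS. ent2 C P E X Y) \<and> es_Con E (ent2 C P E) (\<Union>XS \<union> Y)"
  have XS: "XS \<noteq> {}" and Con: "es_Con E (ent2 C P E) (\<Union>XS \<union> Y)" using h by auto
  show "ent2 C P E (\<Inter>XS) Y"
  proof (rule e2_inter_core)
    show "XS \<noteq> {}" "\<forall>X\<in>XS. ent2 C P E X Y" using h by auto
    fix e assume e: "Y = {e}" and a: "\<forall>X\<in>XS. X \<union> {e} \<in> C"
    show "\<Inter>((\<lambda>X. X \<union> {e}) ` XS) \<in> C"
    proof (rule G_inter[OF pk H NI])
      show "(\<lambda>X. X \<union> {e}) ` XS \<subseteq> C" "(\<lambda>X. X \<union> {e}) ` XS \<noteq> {}" using a XS by auto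
      fix V assume "V \<subseteq> \<Union>((\<lambda>X. X \<union> {e}) ` XS)"
      then have "V \<subseteq> \<Union>XS \<union> {e}" using union_un[OF XS, of "{e}"] by simp
      then have "V \<subseteq> \<Union>XS \<union> Y" using e by simp
      then obtain Z where "ent2 C P E Z V" using Con unfolding es_Con_def by blast
      then show "cs_consistent C V \<or> DD P V" by (rule e2_cons)
    qed
  qed
qed


lemma tr:
  assumes pk: "package P" and q: "q \<in> translate_set P"
  shows "(q = ERooted \<longrightarrow> CRooted \<in> P) \<and> (q = Singular \<longrightarrow> BoundedUnions \<in> P)
       \<and> (q = Conjunctive \<longrightarrow> NEInters \<in> P) \<and> (q = LocallyConjunctive \<longrightarrow> BoundedNEInters \<in> P)
       \<and> (q = EFiniteConflict \<longrightarrow> CFiniteConflict \<in> P) \<and> (q = EBinaryConflict \<longrightarrow> CBinaryConflict \<in> P)"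
proof -
  obtain p where p: "p \<in> P" "q \<in> translate p" using q unfolding translate_set_def by blast
  show ?thesis using pk p by (cases p) (auto simp: package_def)
qed

lemma construct:
  assumes cs: "config_structure E C" and pk: "package P" and H: "\<forall>p\<in>P. cholds p E C"
  shows "\<exists>ent. event_structure E ent \<and> es_pure E ent
                  \<and> (\<forall>q\<in>translate_set P. eholds q E ent)
                  \<and> left_closed_configs E ent = C"
proof (cases "BoundedUnions \<in> P")
  case True
  have "\<forall>q\<in>translate_set P. eholds q E (ent2 C P E)"
  proof
    fix q assume q: "q \<in> translate_set P"
    note t = tr[OF pk q]
    show "eholds q E (ent2 C P E)"
    proof (cases q)
      case ERooted then show ?thesis using t e2_rooted[OF H] by simp
    next
      case Singular then show ?thesis using e2_sing by simp
    next
      case Conjunctive then show ?thesis using t e2_conj[OF H] by simp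
    next
      case LocallyConjunctive then show ?thesis using t e2_lconj[OF pk H] by simp
    next
      case EFiniteConflict then show ?thesis using t e2_fc by simp
    next
      case EBinaryConflict then show ?thesis using t e2_bc by simp
    qed
  qed
  then show ?thesis using e2_es[OF cs] e2_pure e2_lc[OF cs pk H True] by blast
next
  case False
  have "\<forall>q\<in>translate_set P. eholds q E (ent1 C P E)"
  proof
    fix q assume q: "q \<in> translate_set P"
    note t = tr[OF pk q]
    show "eholds q E (ent1 C P E)"
    proof (cases q)
      case ERooted then show ?thesis using t e1_rooted[OF H] by simp
    next
      case Singular then show ?thesis using t False by simp
    next
      case Conjunctive then show ?thesis using t e1_conj[OF H] by simp
    next
      case LocallyConjunctive then show ?thesis using t e1_lconj[OF pk H] by simp
    next
      case EFiniteConflict then show ?thesis using t e1_fc by simp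
    next
      case EBinaryConflict then show ?thesis using t e1_bc by simp
    qed
  qed
  then show ?thesis using e1_es[OF cs] e1_pure e1_lc[OF cs pk H] by blast
qed

theorem mainTheorem12:
  fixes E :: "'a set" and C :: "'a set set" and P :: "cprop set"
  assumes "config_structure E C"
    and "package P"
  shows "((\<forall>p\<in>P. cholds p E C) \<longleftrightarrow>
           (\<exists>ent. event_structure E ent \<and> (\<forall>q\<in>translate_set P. eholds q E ent)
                  \<and> left_closed_configs E ent = C))
       \<and> ((\<forall>p\<in>P. cholds p E C) \<longrightarrow>
           (\<exists>ent. event_structure E ent \<and> es_pure E ent
                  \<and> (\<forall>q\<in>translate_set P. eholds q E ent)
                  \<and> left_closed_configs E ent = C))"
proof -
  have fwd: "(\<forall>p\<in>P. cholds p E C) \<longrightarrow>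
           (\<exists>ent. event_structure E ent \<and> es_pure E ent
                  \<and> (\<forall>q\<in>translate_set P. eholds q E ent)
                  \<and> left_closed_configs E ent = C)"
    using construct[OF assms] by blast
  have bwd: "(\<exists>ent. event_structure E ent \<and> (\<forall>q\<in>translate_set P. eholds q E ent)
                  \<and> left_closed_configs E ent = C) \<Longrightarrow> (\<forall>p\<in>P. cholds p E C)"
  proof -
    assume "\<exists>ent. event_structure E ent \<and> (\<forall>q\<in>translate_set P. eholds q E ent)
                  \<and> left_closed_configs E ent = C"
    then obtain ent where e: "\<forall>q\<in>translate_set P. eholds q E ent" "left_closed_configs E ent = C"
      by blast
    show "\<forall>p\<in>P. cholds p E C"
    proof
      fix p assume "p \<in> P"
      then have "cholds p E (left_closed_configs E ent)" by (rule es_to_cs[OF e(1)])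
      then show "cholds p E C" using e(2) by simp
    qed
  qed
  show ?thesis using fwd bwd by blast
qed

end
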